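(* Let $k \geq 2$, $q \in (G,2)$ where $G = \frac{1+\sqrt5}{2}$, and $m \geq 0$ an integer. Let $$N_k^m(q) = \bigcap_{i=0}^m g_{q,k}^i(\mathcal{U}_q + 1) \cap g_{q,k}^m(\mathcal{U}_q).$$ If $x$ is a real number such that $f_0(x) = qx \in N_k^m(q)$, then $x \in \mathcal{U}_q^{(m+2)} \cap J_q$, and hence $q \in \mathcal{B}_{m+2}$.
   Context: For $q \in (1,2)$ let $I_q = [0, \frac{1}{q-1}]$. A sequence $(\epsilon_j)_{j\ge1} \in \{0,1\}^\mathbb{N}$ is a base $q$ expansion of $x$ if $x = \sum_{j\ge1} \epsilon_j q^{-j}$; $\Sigma_q(x)$ is the set of base $q$ expansions of $x$. $\mathcal{U}_q = \{x \in I_q : |\Sigma_q(x)| = 1\}$, and for $n \ge 2$, $\mathcal{U}_q^{(n)} = \{x \in I_q : |\Sigma_q(x)| = n\}$, $\mathcal{B}_n = \{q \in (1,2) : \mathcal{U}_q^{(n)} \neq \emptyset\}$. $\mathcal{U}_q + 1 = \{u+1 : u \in \mathcal{U}_q\}$. The maps are $f_0(x) = qx$ and $f_1(x) = qx - 1$, with inverses $f_0^{-1}(x) = x/q$, $f_1^{-1}(x) = (x+1)/q$. $g_{q,k} = f_1^{-(k-1)} \circ f_0^{-1}$, i.e. the affine map $g_{q,k}(x) = q^{-k}x + \sum_{j=1}^{k-1} q^{-j}$, and $g_{q,k}^i$ is its $i$-fold composition ($g^0$ is the identity). $J_q = [\frac1q, \frac{1}{q(q-1)}]$. *)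

theory Defs
  imports Complex_Main
begin

text \<open>A digit sequence is a map nat \<Rightarrow> bool; index j (from 0) stands for the
paper's digit epsilon_(j+1), with True = 1 and False = 0.\<close>

definition I_q :: "real \<Rightarrow> real set" where
  "I_q q = {0 .. 1 / (q - 1)}"

definition expansions :: "real \<Rightarrow> real \<Rightarrow> (nat \<Rightarrow> bool) set" where
  "expansions q x = {e. (\<lambda>j. (if e j then 1 else 0) / q ^ (Suc j)) sums x}"

definition U_q :: "real \<Rightarrow> real set" where
  "U_q q = {x \<in> I_q q. card (expansions q x) = 1}"

definition U_qn :: "real \<Rightarrow> nat \<Rightarrow> real set" where
  "U_qn q n = {x \<in> I_q q. card (expansions q x) = n}"

definition B_n :: "nat \<Rightarrow> real set" where
  "B_n n = {q. 1 < q \<and> q < 2 \<and> U_qn q n \<noteq> {}}"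

definition f0 :: "real \<Rightarrow> real \<Rightarrow> real" where "f0 q x = q * x"
definition f0_inv :: "real \<Rightarrow> real \<Rightarrow> real" where "f0_inv q x = x / q"
definition f1_inv :: "real \<Rightarrow> real \<Rightarrow> real" where "f1_inv q x = (x + 1) / q"

definition g :: "real \<Rightarrow> nat \<Rightarrow> real \<Rightarrow> real" where
  "g q k = (f1_inv q ^^ (k - 1)) \<circ> f0_inv q"

definition J_q :: "real \<Rightarrow> real set" where
  "J_q q = {1 / q .. 1 / (q * (q - 1))}"

definition N_km :: "real \<Rightarrow> nat \<Rightarrow> nat \<Rightarrow> real set" where
  "N_km q k m = (\<Inter>i\<in>{0..m}. (g q k ^^ i) ` ((\<lambda>u. u + 1) ` U_q q))
                 \<inter> (g q k ^^ m) ` U_q q"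

end

theory Submission
  imports Defs
begin

definition dg :: "bool \<Rightarrow> real" where "dg b = (if b then 1 else 0)"

lemma mem_case_nat_image:
  "e \<in> case_nat b ` A \<longleftrightarrow> e 0 = b \<and> (\<lambda>n. e (Suc n)) \<in> A"
proof
  assume "e \<in> case_nat b ` A"
  then show "e 0 = b \<and> (\<lambda>n. e (Suc n)) \<in> A" by auto
next
  assume h: "e 0 = b \<and> (\<lambda>n. e (Suc n)) \<in> A"
  have "e = case_nat b (\<lambda>n. e (Suc n))"
    using h by (auto simp: fun_eq_iff split: nat.split)
  then show "e \<in> case_nat b ` A" using h by (metis image_eqI)
qed

lemma inj_case_nat: "inj (case_nat (b::bool) :: (nat \<Rightarrow> bool) \<Rightarrow> nat \<Rightarrow> bool)"
proof (rule injI)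
  fix s t :: "nat \<Rightarrow> bool" assume "case_nat b s = case_nat b t"
  then have "\<And>n. case_nat b s (Suc n) = case_nat b t (Suc n)" by simp
  then show "s = t" by auto
qed

lemma exp_iff:
  assumes q: "q > 1"
  shows "e \<in> expansions q w \<longleftrightarrow> (\<lambda>n. e (Suc n)) \<in> expansions q (q * w - dg (e 0))"
proof -
  define f where "f = (\<lambda>j. (if e j then 1 else 0) / q ^ (Suc j) :: real)"
  define t where "t = (\<lambda>j. (if e (Suc j) then 1 else 0) / q ^ (Suc j) :: real)"
  have f0: "f 0 = dg (e 0) / q" by (simp add: f_def dg_def)
  have fs: "(\<lambda>n. f (Suc n)) = (\<lambda>n. (1/q) * t n)"
    by (simp add: f_def t_def fun_eq_iff)
  have "e \<in> expansions q w \<longleftrightarrow> f sums w" by (simp add: expansions_def f_def)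
  also have "\<dots> \<longleftrightarrow> (\<lambda>n. f (Suc n)) sums (w - f 0)"
    using sums_Suc_iff[of f "w - f 0"] by simp
  also have "\<dots> \<longleftrightarrow> (\<lambda>n. (1/q) * t n) sums ((1/q) * (q * w - dg (e 0)))"
    using q by (simp add: fs f0 field_simps)
  also have "\<dots> \<longleftrightarrow> t sums (q * w - dg (e 0))"
    using q by (intro sums_mult_iff) simp
  also have "\<dots> \<longleftrightarrow> (\<lambda>n. e (Suc n)) \<in> expansions q (q * w - dg (e 0))"
    by (simp add: expansions_def t_def)
  finally show ?thesis .
qed

lemma exp_split:
  assumes q: "q > 1"
  shows "expansions q w = case_nat False ` expansions q (q * w) \<union> case_nat True ` expansions q (q * w - 1)"
proof (rule set_eqI)
  fix e
  show "e \<in> expansions q w \<longleftrightarrow> e \<in> case_nat False ` expansions q (q * w) \<union> case_nat True ` expansions q (q * w - 1)"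
    unfolding mem_case_nat_image Un_iff using exp_iff[OF q, of e w]
    by (cases "e 0") (simp_all add: dg_def)
qed

lemma exp_range:
  assumes q: "q > 1" and e: "e \<in> expansions q w"
  shows "0 \<le> w \<and> w \<le> 1 / (q - 1)"
proof -
  have s: "(\<lambda>j. (if e j then 1 else 0) / q ^ (Suc j) :: real) sums w"
    using e by (simp add: expansions_def)
  have "(\<lambda>n. (1/q) * (1/q)^n) sums ((1/q) * (1 / (1 - 1/q)))"
    using q by (intro sums_mult geometric_sums) simp
  moreover have "(1/q) * (1 / (1 - 1/q)) = 1 / (q - 1)" using q by (simp add: field_simps)
  ultimately have g: "(\<lambda>n. 1 / q ^ Suc n) sums (1 / (q - 1))"
    by (simp add: power_divide)
  have "0 \<le> w"
    using sums_le[of "\<lambda>_. 0" _ 0, OF _ sums_zero s] q by simp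
  moreover have "w \<le> 1 / (q - 1)"
    using sums_le[OF _ s g] q by simp
  ultimately show ?thesis by simp
qed

lemma exp_empty:
  assumes q: "q > 1" and "w > 1 / (q - 1)"
  shows "expansions q w = {}"
  using exp_range[OF q] assms by force

lemma q_gt1: "(1 + sqrt 5) / 2 < q \<Longrightarrow> q > (1::real)"
proof -
  assume a: "(1 + sqrt 5) / 2 < q"
  have "sqrt 5 \<ge> 1" by simp
  then have "(1 + sqrt 5) / 2 \<ge> 1" by simp
  then show "q > 1" using a by linarith
qed

lemma q_golden:
  assumes q1: "(1 + sqrt 5) / 2 < q"
  shows "1 + 1/q > 1 / (q - 1)"
proof -
  have q: "q > 1" using q_gt1[OF q1] .
  have "1 + sqrt 5 < 2*q" using q1 by (simp add: field_simps)
  then have s: "2*q - 1 > sqrt 5" by linarith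
  have "sqrt 5 \<ge> 0" by simp
  then have "(2*q-1) * (2*q-1) > sqrt 5 * sqrt 5"
    using s q by (intro mult_strict_mono) auto
  then have "(2*q-1) * (2*q-1) > 5" by simp
  then have qq: "q * q - q - 1 > 0" by (simp add: algebra_simps)
  have "(1 + 1/q) * (q * (q - 1)) = q*q - 1" using q by (simp add: field_simps)
  moreover have "1 / (q - 1) * (q * (q - 1)) = q" using q by simp
  ultimately have "(1 / (q - 1)) * (q * (q - 1)) < (1 + 1/q) * (q * (q - 1))" using qq by simp
  moreover have "q * (q - 1) > 0" using q by simp
  ultimately show ?thesis by (meson mult_less_cancel_right_pos)
qed

lemma f1_step:
  assumes q1: "(1 + sqrt 5) / 2 < q" and q2: "q < 2" and t: "t \<ge> 1 / q"
  shows "expansions q (f1_inv q t) = case_nat True ` expansions q t"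
proof -
  have q: "q > 1" using q_gt1[OF q1] .
  have "q * f1_inv q t = t + 1" using q by (simp add: f1_inv_def)
  then have big: "q * f1_inv q t > 1 / (q - 1)"
    using q_golden[OF q1] t by linarith
  have "q * f1_inv q t - 1 = t" using q by (simp add: f1_inv_def)
  then show ?thesis using exp_split[OF q, of "f1_inv q t"] exp_empty[OF q big] by simp
qed

lemma f1_ge:
  assumes q: "q > 1" and t: "t \<ge> 1 / q"
  shows "(f1_inv q ^^ j) t \<ge> 1 / q"
proof (induction j)
  case 0
  then show ?case using t by simp
next
  case (Suc j)
  have "0 \<le> (f1_inv q ^^ j) t" using Suc q by (smt (verit) divide_pos_pos)
  then have "1 \<le> (f1_inv q ^^ j) t + 1" by simp
  then have "1 / q \<le> ((f1_inv q ^^ j) t + 1) / q" using q by (simp add: divide_right_mono)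
  moreover have "f1_inv q ((f1_inv q ^^ j) t) = ((f1_inv q ^^ j) t + 1) / q" by (simp only: f1_inv_def)
  ultimately show ?case by simp
qed

lemma f1_iter:
  assumes q1: "(1 + sqrt 5) / 2 < q" and q2: "q < 2" and t: "t \<ge> 1 / q"
  shows "finite (expansions q ((f1_inv q ^^ j) t)) = finite (expansions q t)
       \<and> card (expansions q ((f1_inv q ^^ j) t)) = card (expansions q t)"
proof (induction j)
  case 0
  then show ?case by simp
next
  case (Suc j)
  have q: "q > 1" using q1 using q_gt1 by blast
  have ge: "(f1_inv q ^^ j) t \<ge> 1 / q" using f1_ge[OF q t] .
  have e: "expansions q ((f1_inv q ^^ Suc j) t) = case_nat True ` expansions q ((f1_inv q ^^ j) t)"
    using f1_step[OF q1 q2 ge] by simp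
  have i: "inj_on (case_nat True) A" for A :: "(nat \<Rightarrow> bool) set"
    by (rule inj_on_subset[OF inj_case_nat subset_UNIV])
  show ?case unfolding e using Suc.IH i card_image finite_image_iff by metis
qed

lemma two_branches:
  assumes q: "q > 1" and A: "finite A" and B: "finite B"
  shows "finite (case_nat False ` A \<union> case_nat True ` B)
     \<and> card (case_nat False ` A \<union> case_nat True ` B) = card A + card B"
proof -
  have d: "case_nat False ` A \<inter> case_nat True ` B = {}" by (force dest: fun_cong[where x=0])
  have "card (case_nat False ` A \<union> case_nat True ` B) = card (case_nat False ` A) + card (case_nat True ` B)"
    using A B d by (intro card_Un_disjoint) auto
  also have "\<dots> = card A + card B"
    using inj_case_nat[of False] inj_case_nat[of True]
    by (simp add: card_image inj_on_subset)
  finally show ?thesis using A B by simp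
qed

lemma g_step:
  assumes q1: "(1 + sqrt 5) / 2 < q" and q2: "q < 2" and k: "k \<ge> 2"
    and z1: "z - 1 \<in> U_q q" and fz: "finite (expansions q z)"
  shows "finite (expansions q (g q k z)) \<and> card (expansions q (g q k z)) = card (expansions q z) + 1"
proof -
  have q: "q > 1" using q1 using q_gt1 by blast
  have z1': "z - 1 \<ge> 0" and c1: "card (expansions q (z - 1)) = 1"
    using z1 by (auto simp: U_q_def I_q_def)
  have f1: "finite (expansions q (z - 1))" using c1 by (intro card_ge_0_finite) simp
  have "z / q \<ge> 1 / q" using z1' q by (simp add: divide_right_mono)
  note it = f1_iter[OF q1 q2 this, of "k - 1"]
  have e: "expansions q (z / q) = case_nat False ` expansions q z \<union> case_nat True ` expansions q (z - 1)"
    using exp_split[OF q, of "z/q"] q by simp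
  have "g q k z = (f1_inv q ^^ (k - 1)) (z / q)" by (simp add: g_def f0_inv_def)
  then show ?thesis using it e two_branches[OF q fz f1] c1 by simp
qed

lemma g_inj:
  assumes q: "q > 1"
  shows "inj (g q k)"
proof -
  have "inj (f1_inv q)" using q by (auto intro!: injI simp: f1_inv_def)
  moreover have "inj (f0_inv q)" using q by (auto intro!: injI simp: f0_inv_def)
  ultimately show ?thesis unfolding g_def by (intro inj_compose inj_fn)
qed

lemma main_count:
  assumes q1: "(1 + sqrt 5) / 2 < q" and q2: "q < 2" and k: "k \<ge> 2"
  shows "z \<in> (g q k ^^ n) ` U_q q \<Longrightarrow> (\<forall>i\<le>n. z \<in> (g q k ^^ i) ` ((\<lambda>u. u + 1) ` U_q q))
     \<Longrightarrow> finite (expansions q z) \<and> card (expansions q z) = n + 1"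
proof (induction n arbitrary: z)
  case 0
  then have "card (expansions q z) = 1" by (auto simp: U_q_def)
  moreover then have "finite (expansions q z)" by (intro card_ge_0_finite) simp
  ultimately show ?case by simp
next
  case (Suc n)
  have q: "q > 1" using q1 using q_gt1 by blast
  obtain u where u: "u \<in> U_q q" "z = g q k ((g q k ^^ n) u)"
    using Suc.prems(1) by auto
  define z' where "z' = (g q k ^^ n) u"
  have zz: "z = g q k z'" using u z'_def by simp
  have H: "\<forall>i\<le>n. z' \<in> (g q k ^^ i) ` ((\<lambda>u. u + 1) ` U_q q)"
  proof (intro allI impI)
    fix i assume "i \<le> n"
    then have "Suc i \<le> Suc n" by simp
    then obtain v where v: "v \<in> (\<lambda>u. u + 1) ` U_q q" "z = g q k ((g q k ^^ i) v)"
      using Suc.prems(2)[rule_format, of "Suc i"] \<open>Suc i \<le> Suc n\<close> by auto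
    then have "z' = (g q k ^^ i) v" using zz g_inj[OF q] by (auto dest: injD)
    then show "z' \<in> (g q k ^^ i) ` ((\<lambda>u. u + 1) ` U_q q)" using v by blast
  qed
  have IH: "finite (expansions q z') \<and> card (expansions q z') = n + 1"
    using Suc.IH[of z'] H u z'_def by blast
  have "z' \<in> (\<lambda>u. u + 1) ` U_q q" using H[rule_format, of 0] by simp
  then have "z' - 1 \<in> U_q q" by auto
  then show ?case using g_step[OF q1 q2 k _ ] IH zz by simp
qed

theorem proposition2p6:
  fixes q x :: real and k m :: nat
  assumes "k \<ge> 2"
    and "(1 + sqrt 5) / 2 < q" and "q < 2"
    and "f0 q x \<in> N_km q k m"
  shows "x \<in> U_qn q (m + 2) \<inter> J_q q \<and> q \<in> B_n (m + 2)"
proof -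
  have q: "q > 1" using assms(2) using q_gt1 by blast
  define y where "y = q * x"
  have yN: "y \<in> N_km q k m" using assms(4) by (simp add: y_def f0_def)
  have A: "y \<in> (g q k ^^ m) ` U_q q" and B: "\<forall>i\<le>m. y \<in> (g q k ^^ i) ` ((\<lambda>u. u + 1) ` U_q q)"
    using yN by (auto simp: N_km_def)
  have cy: "finite (expansions q y) \<and> card (expansions q y) = m + 1"
    using main_count[OF assms(2,3,1) A B] .
  have "y \<in> (\<lambda>u. u + 1) ` U_q q" using B[rule_format, of 0] by simp
  then have y1: "y - 1 \<in> U_q q" by auto
  then have y1c: "card (expansions q (y - 1)) = 1" and y1g: "y - 1 \<ge> 0"
    by (auto simp: U_q_def I_q_def)
  have f1: "finite (expansions q (y - 1))" using y1c by (intro card_ge_0_finite) simp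
  have e: "expansions q x = case_nat False ` expansions q y \<union> case_nat True ` expansions q (y - 1)"
    using exp_split[OF q, of x] by (simp add: y_def)
  have cx: "card (expansions q x) = m + 2"
    using two_branches[OF q _ f1, of "expansions q y"] cy y1c e by simp
  have "expansions q y \<noteq> {}" using cy by auto
  then obtain ey where "ey \<in> expansions q y" by blast
  then have yle: "y \<le> 1 / (q - 1)" using exp_range[OF q] by blast
  have xJ: "x \<in> J_q q"
  proof -
    have "x = y / q" using q by (simp add: y_def)
    moreover have "1 / q \<le> y / q" using y1g q by (simp add: divide_right_mono)
    moreover have "y / q \<le> (1 / (q - 1)) / q"
      by (rule divide_right_mono[OF yle]) (use q in simp)
    moreover have "(1 / (q - 1)) / q = 1 / (q * (q - 1))" by simp
    ultimately show ?thesis unfolding J_q_def by (simp add: mult.commute)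
  qed
  have xI: "x \<in> I_q q"
  proof -
    have "0 \<le> x" using xJ q unfolding J_q_def by (smt (verit) atLeastAtMost_iff divide_pos_pos)
    moreover have "1 / (q * (q - 1)) \<le> 1 / (q - 1)"
    proof -
      have "1 / (q * (q - 1)) = (1 / (q - 1)) / q" by simp
      also have "\<dots> \<le> (1 / (q - 1)) / 1"
        using q by (intro divide_left_mono) auto
      finally show ?thesis by simp
    qed
    ultimately show ?thesis using xJ by (auto simp: J_q_def I_q_def)
  qed
  have xU: "x \<in> U_qn q (m + 2)" using xI cx by (simp add: U_qn_def)
  moreover have "q \<in> B_n (m + 2)" using xU q assms(3) by (auto simp: B_n_def)
  ultimately show ?thesis using xJ by simp
qed

end
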